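(* Let $\Lambda=(V,\pi,v,\le)$ be a bi-colored weighted ordered vertex with $r(\Lambda)=2$, identify $V=\{1,\dots,l\}$ via $\le$, and suppose $V_\bullet=\{a,b\}$ with $b-a\ge3$. Then $$\sum_{(E,s,t)\in\mathcal{E}(\Lambda)}(-1)^{|E_{\bullet\to\circ}|}\prod_{e\in E}v(s(e))v(t(e))=0.$$
   Context: A bi-colored weighted ordered vertex is $\Lambda=(V,\pi,v,\le)$ with $V$ a finite set, $\pi\colon V\to\{\bullet,\circ\}$, $v\colon V\to\mathbb{Z}_{\ge1}$, $\le$ a total order on $V$; $V_\bullet=\pi^{-1}(\bullet)$, $r(\Lambda)=\sum_{i\in V_\bullet}v(i)$. $\mathcal{E}(\Lambda)$ is the set of data $(E,s,t)$ with $E$ a finite set and $s,t\colon E\to V$, such that the quiver $(V,E,s,t)$ has connected and simply connected geometric realization, $\pi s(e)\ne\pi t(e)$ and $s(e)<t(e)$ for all $e\in E$. $E_{\bullet\to\circ}=\{e\in E:\pi s(e)=\bullet\}$. *)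

theory Defs
  imports Main
begin

definition graph_connected :: "'a set \<Rightarrow> ('a \<times> 'a) set \<Rightarrow> bool" where
  "graph_connected V F \<longleftrightarrow> (\<forall>x\<in>V. \<forall>y\<in>V. (x, y) \<in> (F \<union> F\<inverse>)\<^sup>*)"

text \<open>Geometric realization connected and simply connected = a tree: connected and
  acyclic, where acyclic means every edge is a bridge (lies on no cycle).\<close>
definition is_tree :: "'a set \<Rightarrow> ('a \<times> 'a) set \<Rightarrow> bool" where
  "is_tree V F \<longleftrightarrow> graph_connected V F \<and> (\<forall>e\<in>F. \<not> graph_connected V (F - {e}))"

text \<open>The set \<E>(\<Lambda>) for V = {1..l} ordered naturally, colour map col (True = black,
  False = white): edge sets of trees on V, each edge going from a smaller to a larger
  vertex of different colour.\<close>
definition bc_trees :: "nat \<Rightarrow> (nat \<Rightarrow> bool) \<Rightarrow> (nat \<times> nat) set set" where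
  "bc_trees l col = {F. F \<subseteq> {(i, j). i \<in> {1..l} \<and> j \<in> {1..l} \<and> i < j \<and> col i \<noteq> col j}
                        \<and> is_tree {1..l} F}"

end

theory Submission imports Defs begin

lemma no_out:
  assumes "\<And>z. (w,z) \<notin> R" "(w,y) \<in> R\<^sup>*" shows "y = w"
  using assms(2) by (cases rule: converse_rtranclE) (use assms(1) in auto)

lemma leaf_path:
  fixes R :: "('a \<times> 'a) set"
  assumes nb1: "\<And>z. (w,z)\<in>R \<Longrightarrow> z=p" and nb2: "\<And>z. (z,w)\<in>R \<Longrightarrow> z=p" and pw: "p\<noteq>w"
    and xy: "(x,y)\<in>R\<^sup>*" and xw: "x\<noteq>w"
  shows "(y=w \<and> (x,p)\<in>(R - {(p,w),(w,p)})\<^sup>*) \<or> (y\<noteq>w \<and> (x,y)\<in>(R - {(p,w),(w,p)})\<^sup>*)"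
  using xy
proof (induction rule: rtrancl_induct)
  case base
  then show ?case using xw by auto
next
  case (step y z)
  show ?case
  proof (cases "y = w")
    case True
    then have "z = p" using nb1 step.hyps(2) by auto
    then show ?thesis using step.IH True pw by auto
  next
    case False
    show ?thesis
    proof (cases "z = w")
      case True
      then have "y = p" using nb2 step.hyps(2) by auto
      then show ?thesis using step.IH True False by auto
    next
      case False2: False
      have "(y,z) \<in> R - {(p,w),(w,p)}" using step.hyps(2) False False2 by auto
      then show ?thesis using step.IH False False2 by (meson rtrancl_into_rtrancl)
    qed
  qed
qed

lemma conn_reattach:
  assumes conn: "graph_connected V F" and wV: "w\<in>V" and pV: "p\<in>V" and pw: "p\<noteq>w"
    and qV: "q\<in>V" and qw: "q\<noteq>w"
    and nb: "\<And>z. (w,z)\<in>F \<or> (z,w)\<in>F \<Longrightarrow> z=p"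
    and sub: "F - {(p,w),(w,p)} \<subseteq> F'" and eq: "(q,w)\<in>F' \<or> (w,q)\<in>F'"
  shows "graph_connected V F'"
proof -
  define R where "R = F \<union> F\<inverse>"
  define R2 where "R2 = F' \<union> F'\<inverse>"
  have RR: "(R - {(p,w),(w,p)})\<^sup>* \<subseteq> R2\<^sup>*"
    by (rule rtrancl_mono) (use sub in \<open>auto simp: R_def R2_def\<close>)
  have nb1: "\<And>z. (w,z)\<in>R \<Longrightarrow> z=p" and nb2: "\<And>z. (z,w)\<in>R \<Longrightarrow> z=p"
    using nb by (auto simp: R_def)
  have c: "\<And>x y. x\<in>V \<Longrightarrow> y\<in>V \<Longrightarrow> (x,y)\<in>R\<^sup>*" using conn by (auto simp: graph_connected_def R_def)
  have toP: "(x,p)\<in>R2\<^sup>*" if "x\<in>V" for x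
  proof (cases "x = w")
    case True
    have "(w,q)\<in>R2" using eq by (auto simp: R2_def)
    moreover have "(q,p)\<in>R2\<^sup>*"
      using leaf_path[OF nb1 nb2 pw c[OF qV pV] qw] pw RR by auto
    ultimately show ?thesis using True by auto
  next
    case False
    then show ?thesis using leaf_path[OF nb1 nb2 pw c[OF that pV] False] pw RR by auto
  qed
  have symR2: "R2\<inverse> = R2" by (auto simp: R2_def)
  have fromP: "(p,y)\<in>R2\<^sup>*" if "y\<in>V" for y
  proof -
    have "(p,y)\<in>(R2\<inverse>)\<^sup>*" using rtrancl_converseI toP[OF that] by metis
    then show ?thesis using symR2 by simp
  qed
  show ?thesis unfolding graph_connected_def
    using toP fromP by (fold R2_def) (meson rtrancl_trans)
qed

lemma tree_reattach:
  assumes tree: "is_tree V F" and V: "w\<in>V" "p\<in>V" "q\<in>V" "p\<noteq>w" "q\<noteq>w" "p\<noteq>q"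
    and ep: "ep\<in>F" "ep\<in>{(p,w),(w,p)}"
    and inc: "\<And>e. e\<in>F \<Longrightarrow> fst e = w \<or> snd e = w \<Longrightarrow> e = ep"
    and eq: "eq\<in>{(q,w),(w,q)}"
  shows "is_tree V (F - {ep} \<union> {eq})"
proof -
  have conn: "graph_connected V F" and br: "\<forall>e\<in>F. \<not> graph_connected V (F - {e})"
    using tree by (auto simp: is_tree_def)
  have nb: "\<And>z. (w,z)\<in>F \<or> (z,w)\<in>F \<Longrightarrow> z=p"
  proof -
    fix z assume "(w,z)\<in>F \<or> (z,w)\<in>F"
    then show "z = p"
    proof
      assume "(w,z)\<in>F" then have "(w,z) = ep" using inc by force
      then show ?thesis using ep(2) V by auto
    next
      assume "(z,w)\<in>F" then have "(z,w) = ep" using inc by force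
      then show ?thesis using ep(2) V by auto
    qed
  qed
  have eqF: "eq \<notin> F"
  proof
    assume "eq \<in> F" then have "eq = ep" using inc eq by force
    then show False using eq ep V by auto
  qed
  have c1: "graph_connected V (F - {ep} \<union> {eq})"
    by (rule conn_reattach[OF conn V(1,2,4,3,5) nb]) (use ep eq in auto)
  have c2: "\<not> graph_connected V (F - {ep} \<union> {eq} - {e})" if e: "e \<in> F - {ep} \<union> {eq}" for e
  proof (cases "e = eq")
    case True
    have s: "F - {ep} \<union> {eq} - {e} = F - {ep}" using True eqF by auto
    show ?thesis
    proof
      assume "graph_connected V (F - {ep} \<union> {eq} - {e})"
      then have "(w,p) \<in> ((F - {ep}) \<union> (F - {ep})\<inverse>)\<^sup>*" using s V by (auto simp: graph_connected_def)
      moreover have "\<And>z. (w,z) \<notin> (F - {ep}) \<union> (F - {ep})\<inverse>" using inc by force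
      ultimately show False using no_out V by metis
    qed
  next
    case False
    then have eF: "e \<in> F" "e \<noteq> ep" using e by auto
    show ?thesis
    proof
      assume C: "graph_connected V (F - {ep} \<union> {eq} - {e})"
      have nb': "z = q" if "(w,z)\<in>F - {ep} \<union> {eq} - {e} \<or> (z,w)\<in>F - {ep} \<union> {eq} - {e}" for z
        using that inc eq V by force
      have "graph_connected V (F - {e})"
        by (rule conn_reattach[OF C V(1,3) V(5) V(2) V(4) nb']) (use ep eF eq in auto)
      then show False using br eF by auto
    qed
  qed
  show ?thesis using c1 c2 by (auto simp: is_tree_def)
qed


theorem lemma4p13:
  fixes l a b :: nat and col :: "nat \<Rightarrow> bool" and v :: "nat \<Rightarrow> nat"
  assumes "\<forall>i\<in>{1..l}. v i \<ge> 1"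
    and "{i \<in> {1..l}. col i} = {a, b}"
    and "(\<Sum>i\<in>{i \<in> {1..l}. col i}. v i) = 2"
    and "a + 3 \<le> b"
  shows "(\<Sum>F\<in>bc_trees l col. (-1::int) ^ card {e \<in> F. col (fst e)}
            * (\<Prod>e\<in>F. int (v (fst e) * v (snd e)))) = 0"
proof -
  define T where "T = bc_trees l col"
  define f where "f F = (-1::int) ^ card {e \<in> F. col (fst e)} * (\<Prod>e\<in>F. int (v (fst e) * v (snd e)))" for F :: "(nat \<times> nat) set"
  define E0 where "E0 = {(i, j). i \<in> {1..l} \<and> j \<in> {1..l} \<and> i < j \<and> col i \<noteq> col j}"
  have ab: "a \<in> {1..l}" "b \<in> {1..l}" "col a" "col b" using assms(2) by blast+
  have white: "\<And>i. i \<in> {1..l} \<Longrightarrow> col i \<Longrightarrow> i = a \<or> i = b" using assms(2) by blast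
  have "v a + v b = 2" using assms(3,4) unfolding assms(2) by simp
  moreover have "v a \<ge> 1" "v b \<ge> 1" using assms(1) ab by auto
  ultimately have va: "v a = 1" and vb: "v b = 1" by linarith+
  define w1 where "w1 = a + 1"
  define w2 where "w2 = a + 2"
  have wprops: "w \<in> {1..l} \<and> \<not> col w \<and> a < w \<and> w < b" if "w = w1 \<or> w = w2" for w
    using that ab assms(4) white[of w] unfolding w1_def w2_def by auto
  have TE: "F \<subseteq> E0" "is_tree {1..l} F" if "F \<in> T" for F
    using that by (auto simp: T_def bc_trees_def E0_def)
  have finF: "finite F" if "F \<in> T" for F
  proof -
    have "E0 \<subseteq> {1..l} \<times> {1..l}" by (auto simp: E0_def)
    then have "finite E0" using finite_subset by blast
    then show ?thesis using TE(1)[OF that] finite_subset by blast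
  qed
  have inc: "e = (a,w) \<or> e = (w,b)" if "F \<in> T" "e \<in> F" "fst e = w \<or> snd e = w" "w = w1 \<or> w = w2" for F e w
  proof -
    obtain i j where e: "e = (i,j)" by force
    have "i \<in> {1..l}" "j \<in> {1..l}" "i < j" "col i \<noteq> col j" using TE(1)[OF that(1)] that(2) e by (auto simp: E0_def)
    moreover have "col i \<Longrightarrow> i = a \<or> i = b" "col j \<Longrightarrow> j = a \<or> j = b" using white calculation(1,2) by auto
    ultimately show ?thesis using that(3) e wprops[OF that(4)] by auto
  qed
  have conn: "graph_connected {1..l} F" and br: "\<forall>e\<in>F. \<not> graph_connected {1..l} (F - {e})"
    if "F \<in> T" for F using TE(2)[OF that] by (auto simp: is_tree_def)
  have A: "(a,w) \<in> F \<or> (w,b) \<in> F" if "F \<in> T" "w = w1 \<or> w = w2" for F w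
  proof -
    have "(w,a) \<in> (F \<union> F\<inverse>)\<^sup>*" using conn[OF that(1)] wprops[OF that(2)] ab by (auto simp: graph_connected_def)
    moreover have "w \<noteq> a" using wprops[OF that(2)] by auto
    ultimately obtain z where "(w,z) \<in> F \<union> F\<inverse>" by (metis converse_rtranclE)
    then show ?thesis using inc[OF that(1) _ _ that(2), of "(w,z)"] inc[OF that(1) _ _ that(2), of "(z,w)"] by auto
  qed
  have B: "\<not> ((a,w1) \<in> F \<and> (w1,b) \<in> F \<and> (a,w2) \<in> F \<and> (w2,b) \<in> F)" if "F \<in> T" for F
  proof
    assume H: "(a,w1) \<in> F \<and> (w1,b) \<in> F \<and> (a,w2) \<in> F \<and> (w2,b) \<in> F"
    define G where "G = F - {(a,w1)}"
    have w12: "w1 \<noteq> w2" "a \<noteq> w1" "a \<noteq> w2" "b \<noteq> w1" "b \<noteq> w2" unfolding w1_def w2_def using assms(4) by auto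
    have sub: "F \<union> F\<inverse> \<subseteq> (G \<union> G\<inverse>)\<^sup>*"
    proof
      fix x assume x: "x \<in> F \<union> F\<inverse>"
      show "x \<in> (G \<union> G\<inverse>)\<^sup>*"
      proof (cases "x = (a,w1) \<or> x = (w1,a)")
        case True
        have g: "(a,w2) \<in> G \<union> G\<inverse>" "(w2,b) \<in> G \<union> G\<inverse>" "(b,w1) \<in> G \<union> G\<inverse>"
          "(w1,b) \<in> G \<union> G\<inverse>" "(b,w2) \<in> G \<union> G\<inverse>" "(w2,a) \<in> G \<union> G\<inverse>"
          using H w12 by (auto simp: G_def)
        have p1: "(a,w1) \<in> (G \<union> G\<inverse>)\<^sup>*" using g(1-3) by (meson r_into_rtrancl rtrancl_trans)
        have p2: "(w1,a) \<in> (G \<union> G\<inverse>)\<^sup>*" using g(4-6) by (meson r_into_rtrancl rtrancl_trans)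
        show ?thesis using True p1 p2 by auto
      next
        case False then show ?thesis using x by (auto simp: G_def)
      qed
    qed
    have "(F \<union> F\<inverse>)\<^sup>* \<subseteq> (G \<union> G\<inverse>)\<^sup>*"
      using rtrancl_subset_rtrancl[OF sub] .
    then have "graph_connected {1..l} G" using conn[OF that] by (auto simp: graph_connected_def)
    then show False using br[OF that] H by (auto simp: G_def)
  qed
  define swp where "swp w F = (if (a,w) \<in> F then F - {(a,w)} \<union> {(w,b)} else F - {(w,b)} \<union> {(a,w)})" for w F
  define \<iota> where "\<iota> F = (if (a,w1) \<in> F \<and> (w1,b) \<in> F then swp w2 F else swp w1 F)" for F
  have C: "swp w F \<in> T \<and> f (swp w F) = - f F"
    if F: "F \<in> T" and w: "w = w1 \<or> w = w2" and leaf: "\<not> ((a,w) \<in> F \<and> (w,b) \<in> F)" for F w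
  proof -
    note wp = wprops[OF w]
    have new1: "(w,b) \<in> E0" "(a,w) \<in> E0" using wp ab by (auto simp: E0_def)
    have fin: "finite F" using finF[OF F] .
    show ?thesis
    proof (cases "(a,w) \<in> F")
      case True
      then have nb: "(w,b) \<notin> F" using leaf by auto
      have s: "swp w F = F - {(a,w)} \<union> {(w,b)}" using True by (simp add: swp_def)
      have incA: "\<And>e. e\<in>F \<Longrightarrow> fst e = w \<or> snd e = w \<Longrightarrow> e = (a,w)" using inc[OF F _ _ w] nb by metis
      have tr: "is_tree {1..l} (F - {(a,w)} \<union> {(w,b)})"
        by (rule tree_reattach[of "{1..l}" F w a b "(a,w)" "(w,b)", OF TE(2)[OF F] _ _ _ _ _ _ True _ incA]) (use wp ab in auto)
      have inT: "swp w F \<in> T" using tr TE(1)[OF F] new1 s by (auto simp: T_def bc_trees_def E0_def)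
      have c1: "{e \<in> swp w F. col (fst e)} = {e \<in> F. col (fst e)} - {(a,w)}" using s wp ab by auto
      have c2: "card {e \<in> F. col (fst e)} \<ge> 1" using True ab fin
        by (metis (mono_tags, lifting) One_nat_def card_0_eq empty_iff finite_subset mem_Collect_eq less_one not_le subsetI fst_conv)
      have cc: "card {e \<in> swp w F. col (fst e)} = card {e \<in> F. col (fst e)} - 1"
        using c1 True ab fin by simp
      have p1: "(\<Prod>e\<in>F. int (v (fst e) * v (snd e))) = int (v a * v w) * (\<Prod>e\<in>F - {(a,w)}. int (v (fst e) * v (snd e)))"
        by (simp only: prod.remove[OF fin True]) simp
      have p2: "(\<Prod>e\<in>swp w F. int (v (fst e) * v (snd e))) = int (v w * v b) * (\<Prod>e\<in>F - {(a,w)}. int (v (fst e) * v (snd e)))"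
      proof -
        have "swp w F = insert (w,b) (F - {(a,w)})" using s by auto
        moreover have "finite (F - {(a,w)})" "(w,b) \<notin> F - {(a,w)}" using fin nb by auto
        ultimately have E: "(\<Prod>e\<in>swp w F. int (v (fst e) * v (snd e))) = int (v (fst (w,b)) * v (snd (w,b))) * (\<Prod>e\<in>F - {(a,w)}. int (v (fst e) * v (snd e)))"
          by (metis (no_types, lifting) prod.insert)
        show ?thesis unfolding E by simp
      qed
      have sg: "(-1::int) ^ card {e \<in> swp w F. col (fst e)} = - ((-1) ^ card {e \<in> F. col (fst e)})"
      proof -
        have "card {e \<in> F. col (fst e)} \<noteq> 0" using c2 by simp
        then obtain n where "card {e \<in> F. col (fst e)} = Suc n" using not0_implies_Suc by blast
        then show ?thesis using cc by simp
      qed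
      have "f (swp w F) = - f F" unfolding f_def sg p1 p2 using va vb by simp
      then show ?thesis using inT by simp
    next
      case False
      then have nb: "(w,b) \<in> F" using A[OF F w] by auto
      have s: "swp w F = F - {(w,b)} \<union> {(a,w)}" using False by (simp add: swp_def)
      have incB: "\<And>e. e\<in>F \<Longrightarrow> fst e = w \<or> snd e = w \<Longrightarrow> e = (w,b)" using inc[OF F _ _ w] False by metis
      have tr: "is_tree {1..l} (F - {(w,b)} \<union> {(a,w)})"
        by (rule tree_reattach[of "{1..l}" F w b a "(w,b)" "(a,w)", OF TE(2)[OF F] _ _ _ _ _ _ nb _ incB]) (use wp ab in auto)
      have inT: "swp w F \<in> T" using tr TE(1)[OF F] new1 s by (auto simp: T_def bc_trees_def E0_def)
      have c1: "{e \<in> swp w F. col (fst e)} = insert (a,w) {e \<in> F. col (fst e)}" using s wp ab by auto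
      have cc: "card {e \<in> swp w F. col (fst e)} = Suc (card {e \<in> F. col (fst e)})"
        using c1 False fin by simp
      have p1: "(\<Prod>e\<in>F. int (v (fst e) * v (snd e))) = int (v w * v b) * (\<Prod>e\<in>F - {(w,b)}. int (v (fst e) * v (snd e)))"
        by (simp only: prod.remove[OF fin nb]) simp
      have p2: "(\<Prod>e\<in>swp w F. int (v (fst e) * v (snd e))) = int (v a * v w) * (\<Prod>e\<in>F - {(w,b)}. int (v (fst e) * v (snd e)))"
      proof -
        have "swp w F = insert (a,w) (F - {(w,b)})" using s by auto
        moreover have "finite (F - {(w,b)})" "(a,w) \<notin> F - {(w,b)}" using fin False by auto
        ultimately have E: "(\<Prod>e\<in>swp w F. int (v (fst e) * v (snd e))) = int (v (fst (a,w)) * v (snd (a,w))) * (\<Prod>e\<in>F - {(w,b)}. int (v (fst e) * v (snd e)))"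
          by (metis (no_types, lifting) prod.insert)
        show ?thesis unfolding E by simp
      qed
      have "f (swp w F) = - f F" unfolding f_def cc p1 p2 using va vb by simp
      then show ?thesis using inT by simp
    qed
  qed
  have swp2: "swp w (swp w F) = F" if "F \<in> T" "w = w1 \<or> w = w2" "\<not> ((a,w) \<in> F \<and> (w,b) \<in> F)" for F w
    using that(3) A[OF that(1,2)] wprops[OF that(2)] unfolding swp_def by auto
  have swpleaf: "\<not> ((a,w) \<in> swp w F \<and> (w,b) \<in> swp w F)" if "w = w1 \<or> w = w2" for F w
    using wprops[OF that] unfolding swp_def by auto
  have w12: "w1 \<noteq> w2" "a \<noteq> w1" "a \<noteq> w2" "b \<noteq> w1" "b \<noteq> w2" unfolding w1_def w2_def using assms(4) by auto
  have D: "\<iota> F \<in> T \<and> \<iota> (\<iota> F) = F \<and> f (\<iota> F) = - f F" if F: "F \<in> T" for F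
  proof (cases "(a,w1) \<in> F \<and> (w1,b) \<in> F")
    case True
    have l2: "\<not> ((a,w2) \<in> F \<and> (w2,b) \<in> F)" using B[OF F] True by auto
    have i: "\<iota> F = swp w2 F" using True by (simp add: \<iota>_def)
    have keep: "(a,w1) \<in> swp w2 F \<and> (w1,b) \<in> swp w2 F" using True w12 unfolding swp_def by auto
    show ?thesis using C[OF F _ l2] swp2[OF F _ l2] i keep by (simp add: \<iota>_def)
  next
    case False
    have i: "\<iota> F = swp w1 F" unfolding \<iota>_def by (rule if_not_P[OF False])
    have nk: "\<not> ((a,w1) \<in> swp w1 F \<and> (w1,b) \<in> swp w1 F)" using swpleaf by auto
    have i2: "\<iota> (swp w1 F) = swp w1 (swp w1 F)" unfolding \<iota>_def by (rule if_not_P[OF nk])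
    show ?thesis using C[OF F _ False] swp2[OF F _ False] i i2 by simp
  qed
  have "sum (\<lambda>F. f (\<iota> F)) T = sum f T"
    by (rule sum.reindex_bij_witness[of T \<iota> \<iota>]) (use D in auto)
  moreover have "sum (\<lambda>F. f (\<iota> F)) T = - sum f T"
    using D by (simp add: sum_negf[symmetric])
  ultimately have "sum f T = 0" by simp
  then show ?thesis by (simp add: T_def f_def)
qed

end
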